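(* Let $N, M_1, M_2, P, R_1, R_2, R_3, \widetilde{M}_2, \widetilde{P}$ be positive integers with $\widetilde{M}_2 \le M_2$, $\widetilde{P}\le P$. Let $\mathbf{y}\in\mathbb{C}^N$, $\mathbf{H}\in\mathbb{C}^{N\times M_1}$ and $\mathcal{M}\in\mathbb{R}^{N\times M_2\times P}$ be as in the context. Let $\mathbf{U}_2\in\mathbb{R}^{M_2\times\widetilde{M}_2}$ and $\mathbf{U}_3\in\mathbb{R}^{P\times\widetilde{P}}$ have orthonormal columns, and set $\widetilde{\mathcal{M}}=\mathcal{M}\times_2\mathbf{U}_2^\top\times_3\mathbf{U}_3^\top$ and $\widehat{\mathcal{M}}=\mathcal{M}\times_2\mathbf{U}_2\mathbf{U}_2^\top\times_3\mathbf{U}_3\mathbf{U}_3^\top$. Suppose $(\mathcal{G}^\star,\mathbf{A}^\star,\mathbf{B}^\star,\mathbf{C}^\star)$, with $\mathcal{G}^\star\in\mathbb{C}^{R_1\times R_2\times R_3}$, $\mathbf{A}^\star\in\mathbb{C}^{M_1\times R_1}$, $\mathbf{B}^\star\in\mathbb{C}^{M_2\times R_2}$, $\mathbf{C}^\star\in\mathbb{C}^{P\times R_3}$, attains $$m_{\mathrm{Tu}}:=\min_{\mathcal{G},\mathbf{A},\mathbf{B},\mathbf{C}}\Big\|\mathbf{y}-\sum_{r_1=1}^{R_1}\sum_{r_2=1}^{R_2}\sum_{r_3=1}^{R_3}\mathcal{G}_{r_1r_2r_3}\, \mathbf{H}\mathbf{A}_{:r_1}\odot\big(\mathcal{M}\times_2\mathbf{B}_{:r_2}\times_3\mathbf{C}_{:r_3}\big)\Big\|_F$$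 over $\mathcal{G}\in\mathbb{C}^{R_1\times R_2\times R_3},\mathbf{A}\in\mathbb{C}^{M_1\times R_1},\mathbf{B}\in\mathbb{C}^{M_2\times R_2},\mathbf{C}\in\mathbb{C}^{P\times R_3}$. Then $$\inf_{\substack{\mathcal{G},\ \mathbf{A}\\ \widetilde{\mathbf{B}}\in\mathbb{C}^{\widetilde{M}_2\times R_2}\\ \widetilde{\mathbf{C}}\in\mathbb{C}^{\widetilde{P}\times R_3}}}\Big\|\mathbf{y}-\sum_{r_1,r_2,r_3}\mathcal{G}_{r_1r_2r_3}\, \mathbf{H}\mathbf{A}_{:r_1}\odot\big(\widetilde{\mathcal{M}}\times_2\widetilde{\mathbf{B}}_{:r_2}\times_3\widetilde{\mathbf{C}}_{:r_3}\big)\Big\|_F \le m_{\mathrm{Tu}}+\|\mathcal{M}-\widehat{\mathcal{M}}\|_F\sum_{r_1,r_2,r_3}|\mathcal{G}^\star_{r_1r_2r_3}|\,\|\mathbf{H}\mathbf{A}^\star_{:r_1}\|_\infty\|\mathbf{B}^\star_{:r_2}\|_F\|\mathbf{C}^\star_{:r_3}\|_F,$$ where $\mathcal{G}$ ranges over $\mathbb{C}^{R_1\times R_2\times R_3}$, $\mathbf{A}$ over $\mathbb{C}^{M_1\times R_1}$, and the sums are over $1\le r_k\le R_k$.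
   Context: Let $x(t)$, $t\in\mathbb{Z}$, be a complex-valued input signal and $y(t)$ a complex-valued output signal, $t_0\in\mathbb{Z}$. Define $\mathbf{y}=(y(t_0),\dots,y(t_0+N-1))^\top\in\mathbb{C}^N$; $\mathbf{H}\in\mathbb{C}^{N\times M_1}$ with entries $h_{ni}=x(t_0+n-i)$ ($n=0,\dots,N-1$, $i=0,\dots,M_1-1$); and $\mathcal{M}\in\mathbb{R}^{N\times M_2\times P}$ with entries $\mathcal{M}_{njp}=|x(t_0+n-j)|^p$ ($j=0,\dots,M_2-1$, $p=0,\dots,P-1$, with $0^0=1$). Mode-$k$ product of a tensor $\mathcal{X}\in\mathbb{C}^{I_1\times I_2\times I_3}$ with a matrix $\mathbf{Q}\in\mathbb{C}^{n\times I_k}$: replace mode $k$ by $n$ with $(\mathcal{X}\times_k\mathbf{Q})_{\dots j\dots}=\sum_{i_k}\mathcal{X}_{\dots i_k\dots}q_{j i_k}$ (no conjugation). Mode-$k$ product with a vector $\mathbf{v}\in\mathbb{C}^{I_k}$ contracts mode $k$: $(\mathcal{X}\times_k\mathbf{v})=\sum_{i_k}\mathcal{X}_{\dots i_k\dots}v_{i_k}$, removing that mode; in particular $(\mathcal{M}\times_2\mathbf{b}\times_3\mathbf{c})_n=\sum_{j,p}\mathcal{M}_{njp}b_jc_p$. $\mathbf{A}_{:r}$ denotes the $r$-th column of $\mathbf{A}$; $\odot$ is the entrywise (Hadamard) product; $\|\cdot\|_F$ is the Frobenius (Euclidean for vectors) norm; $\|\cdot\|_\infty$ is the maximum modulus of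 the entries of a vector. *)

theory Defs
  imports Complex_Main
begin

text \<open>Vectors, matrices and 3-way tensors are represented by functions on nat
  indices; only entries with indices below the stated dimensions are ever used.\<close>

definition yvec :: "(int \<Rightarrow> complex) \<Rightarrow> int \<Rightarrow> nat \<Rightarrow> complex" where
  "yvec y t0 n = y (t0 + int n)"

definition Hmat :: "(int \<Rightarrow> complex) \<Rightarrow> int \<Rightarrow> nat \<Rightarrow> nat \<Rightarrow> complex" where
  "Hmat x t0 n i = x (t0 + int n - int i)"

definition Mten :: "(int \<Rightarrow> complex) \<Rightarrow> int \<Rightarrow> nat \<Rightarrow> nat \<Rightarrow> nat \<Rightarrow> real" where
  "Mten x t0 n j p = cmod (x (t0 + int n - int j)) ^ p"

definition compress ::
  "(nat \<Rightarrow> nat \<Rightarrow> nat \<Rightarrow> real) \<Rightarrow> nat \<Rightarrow> nat \<Rightarrow> (nat \<Rightarrow> nat \<Rightarrow> real) \<Rightarrow> (nat \<Rightarrow> nat \<Rightarrow> real)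
   \<Rightarrow> nat \<Rightarrow> nat \<Rightarrow> nat \<Rightarrow> real" where
  "compress T M2 P U2 U3 n j p =
     (\<Sum>j'<M2. \<Sum>p'<P. T n j' p' * U2 j' j * U3 p' p)"

definition project ::
  "(nat \<Rightarrow> nat \<Rightarrow> nat \<Rightarrow> real) \<Rightarrow> nat \<Rightarrow> nat \<Rightarrow> nat \<Rightarrow> nat \<Rightarrow> (nat \<Rightarrow> nat \<Rightarrow> real) \<Rightarrow> (nat \<Rightarrow> nat \<Rightarrow> real)
   \<Rightarrow> nat \<Rightarrow> nat \<Rightarrow> nat \<Rightarrow> real" where
  "project T M2 P M2t Pt U2 U3 n j p =
     (\<Sum>j'<M2. \<Sum>p'<P. T n j' p' * (\<Sum>k<M2t. U2 j k * U2 j' k) * (\<Sum>k<Pt. U3 p k * U3 p' k))"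

definition orthonormal_cols :: "nat \<Rightarrow> nat \<Rightarrow> (nat \<Rightarrow> nat \<Rightarrow> real) \<Rightarrow> bool" where
  "orthonormal_cols m k U \<longleftrightarrow>
     (\<forall>a<k. \<forall>b<k. (\<Sum>i<m. U i a * U i b) = (if a = b then 1 else 0))"

definition HA :: "(nat \<Rightarrow> nat \<Rightarrow> complex) \<Rightarrow> nat \<Rightarrow> (nat \<Rightarrow> nat \<Rightarrow> complex) \<Rightarrow> nat \<Rightarrow> nat \<Rightarrow> complex" where
  "HA H M1 A r n = (\<Sum>i<M1. H n i * A i r)"

definition contr23 :: "(nat \<Rightarrow> nat \<Rightarrow> nat \<Rightarrow> real) \<Rightarrow> nat \<Rightarrow> nat \<Rightarrow> (nat \<Rightarrow> complex) \<Rightarrow> (nat \<Rightarrow> complex)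
   \<Rightarrow> nat \<Rightarrow> complex" where
  "contr23 T M2 P b c n = (\<Sum>j<M2. \<Sum>p<P. of_real (T n j p) * b j * c p)"

definition residual ::
  "nat \<Rightarrow> (nat \<Rightarrow> complex) \<Rightarrow> (nat \<Rightarrow> nat \<Rightarrow> complex) \<Rightarrow> nat \<Rightarrow> (nat \<Rightarrow> nat \<Rightarrow> nat \<Rightarrow> real)
   \<Rightarrow> nat \<Rightarrow> nat \<Rightarrow> nat \<Rightarrow> nat \<Rightarrow> nat
   \<Rightarrow> (nat \<Rightarrow> nat \<Rightarrow> nat \<Rightarrow> complex) \<Rightarrow> (nat \<Rightarrow> nat \<Rightarrow> complex) \<Rightarrow> (nat \<Rightarrow> nat \<Rightarrow> complex)
   \<Rightarrow> (nat \<Rightarrow> nat \<Rightarrow> complex) \<Rightarrow> real" where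
  "residual N y H M1 T M2 P R1 R2 R3 G A B C =
     sqrt (\<Sum>n<N. (cmod (y n - (\<Sum>r1<R1. \<Sum>r2<R2. \<Sum>r3<R3.
        G r1 r2 r3 * HA H M1 A r1 n * contr23 T M2 P (\<lambda>j. B j r2) (\<lambda>p. C p r3) n)))\<^sup>2)"

definition frob3 :: "nat \<Rightarrow> nat \<Rightarrow> nat \<Rightarrow> (nat \<Rightarrow> nat \<Rightarrow> nat \<Rightarrow> real) \<Rightarrow> real" where
  "frob3 N M2 P T = sqrt (\<Sum>n<N. \<Sum>j<M2. \<Sum>p<P. (T n j p)\<^sup>2)"

definition colnorm :: "nat \<Rightarrow> (nat \<Rightarrow> nat \<Rightarrow> complex) \<Rightarrow> nat \<Rightarrow> real" where
  "colnorm m B r = sqrt (\<Sum>i<m. (cmod (B i r))\<^sup>2)"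

definition supnorm :: "nat \<Rightarrow> (nat \<Rightarrow> complex) \<Rightarrow> real" where
  "supnorm N v = Max ((\<lambda>n. cmod (v n)) ` {..<N})"

end

theory Submission imports Defs "HOL-Analysis.L2_Norm" begin

lemma swap4: "(\<Sum>j<(a::nat). \<Sum>p<(b::nat). \<Sum>j'<(c::nat). \<Sum>p'<(d::nat). f j p j' p') =
  (\<Sum>j'<c. \<Sum>p'<d. \<Sum>j<a. \<Sum>p<b. (f j p j' p' :: complex))"
proof -
  have "(\<Sum>j<a. \<Sum>p<b. \<Sum>j'<c. \<Sum>p'<d. f j p j' p') = (\<Sum>j<a. \<Sum>j'<c. \<Sum>p<b. \<Sum>p'<d. f j p j' p')"
    by (rule sum.cong[OF refl], rule sum.swap)
  also have "\<dots> = (\<Sum>j<a. \<Sum>j'<c. \<Sum>p'<d. \<Sum>p<b. f j p j' p')"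
    by (rule sum.cong[OF refl], rule sum.cong[OF refl], rule sum.swap)
  also have "\<dots> = (\<Sum>j'<c. \<Sum>j<a. \<Sum>p'<d. \<Sum>p<b. f j p j' p')"
    by (rule sum.swap)
  also have "\<dots> = (\<Sum>j'<c. \<Sum>p'<d. \<Sum>j<a. \<Sum>p<b. f j p j' p')"
    by (rule sum.cong[OF refl], rule sum.swap)
  finally show ?thesis .
qed

lemma lemA:
  fixes X U V :: "nat \<Rightarrow> nat \<Rightarrow> real" and bt ct :: "nat \<Rightarrow> complex"
  shows "(\<Sum>j<ma. \<Sum>p<pa. of_real (\<Sum>j'<mb. \<Sum>p'<pb. X j' p' * U j' j * V p' p) * bt j * ct p)
   = (\<Sum>j'<mb. \<Sum>p'<pb. of_real (X j' p') * (\<Sum>j<ma. of_real (U j' j) * bt j) * (\<Sum>p<pa. of_real (V p' p) * ct p))"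
proof -
  have h: "?thesis = ((\<Sum>j<ma. \<Sum>p<pa. \<Sum>j'<mb. \<Sum>p'<pb. of_real (X j' p') * of_real (U j' j) * bt j * (of_real (V p' p) * ct p))
     = (\<Sum>j'<mb. \<Sum>p'<pb. \<Sum>j<ma. \<Sum>p<pa. of_real (X j' p') * of_real (U j' j) * bt j * (of_real (V p' p) * ct p)))"
    by (simp add: of_real_sum sum_distrib_left sum_distrib_right mult_ac)
  show ?thesis unfolding h by (rule swap4)
qed
lemma lemB:
  fixes X U V :: "nat \<Rightarrow> nat \<Rightarrow> real" and b cc :: "nat \<Rightarrow> complex"
  shows "(\<Sum>a<m2. \<Sum>c<pp. of_real (\<Sum>j'<m2. \<Sum>p'<pp. X j' p' * (\<Sum>k<m2t. U a k * U j' k) * (\<Sum>l<pt. V c l * V p' l)) * b a * cc c)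
   = (\<Sum>j'<m2. \<Sum>p'<pp. of_real (X j' p') * (\<Sum>k<m2t. of_real (U j' k) * (\<Sum>a<m2. of_real (U a k) * b a))
        * (\<Sum>l<pt. of_real (V p' l) * (\<Sum>c<pp. of_real (V c l) * cc c)))"
proof -
  have 1: "(\<Sum>a<m2. of_real (\<Sum>k<m2t. U a k * U j' k) * b a) = (\<Sum>k<m2t. of_real (U j' k) * (\<Sum>a<m2. of_real (U a k) * b a))"
    for U :: "nat \<Rightarrow> nat \<Rightarrow> real" and b :: "nat \<Rightarrow> complex" and j' m2 m2t
    by (simp add: of_real_sum sum_distrib_left sum_distrib_right mult_ac sum.swap[of _ "{..<m2t}"])
  show ?thesis
    using lemA[where ma=m2 and pa=pp and X=X and mb=m2 and pb=pp and U="\<lambda>j' a. \<Sum>k<m2t. U a k * U j' k" and V="\<lambda>p' c. \<Sum>l<pt. V c l * V p' l" and bt=b and ct=cc]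
    by (simp only: 1)
qed

lemma L2_sum:
  fixes f :: "'i \<Rightarrow> 'a \<Rightarrow> complex"
  assumes "finite I"
  shows "L2_set (\<lambda>n. cmod (\<Sum>i\<in>I. f i n)) A \<le> (\<Sum>i\<in>I. L2_set (\<lambda>n. cmod (f i n)) A)"
  using assms
proof (induction I rule: finite_induct)
  case empty
  then show ?case by (simp add: L2_set_def)
next
  case (insert i I)
  have "L2_set (\<lambda>n. cmod (\<Sum>i\<in>insert i I. f i n)) A \<le> L2_set (\<lambda>n. cmod (f i n) + cmod (\<Sum>i\<in>I. f i n)) A"
    using insert by (intro L2_set_mono) (auto simp: norm_triangle_ineq)
  also have "\<dots> \<le> L2_set (\<lambda>n. cmod (f i n)) A + L2_set (\<lambda>n. cmod (\<Sum>i\<in>I. f i n)) A"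
    by (rule L2_set_triangle_ineq)
  finally show ?case using insert by simp
qed

lemma CS:
  fixes E :: "nat \<Rightarrow> nat \<Rightarrow> real" and b c :: "nat \<Rightarrow> complex"
  shows "cmod (\<Sum>j<m. \<Sum>p<q. of_real (E j p) * b j * c p)
     \<le> sqrt (\<Sum>j<m. \<Sum>p<q. (E j p)\<^sup>2) * (sqrt (\<Sum>j<m. (cmod (b j))\<^sup>2) * sqrt (\<Sum>p<q. (cmod (c p))\<^sup>2))"
proof -
  let ?K = "{..<m} \<times> {..<q}"
  have "cmod (\<Sum>j<m. \<Sum>p<q. of_real (E j p) * b j * c p) \<le> (\<Sum>j<m. cmod (\<Sum>p<q. of_real (E j p) * b j * c p))"
    by (rule norm_sum)
  also have "\<dots> \<le> (\<Sum>j<m. \<Sum>p<q. cmod (of_real (E j p) * b j * c p))"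
    by (intro sum_mono norm_sum)
  also have "\<dots> = (\<Sum>(j,p)\<in>?K. \<bar>E j p\<bar> * \<bar>cmod (b j) * cmod (c p)\<bar>)"
    by (simp add: sum.cartesian_product norm_mult mult.assoc)
  also have "\<dots> \<le> L2_set (\<lambda>(j,p). E j p) ?K * L2_set (\<lambda>(j,p). cmod (b j) * cmod (c p)) ?K"
    using L2_set_mult_ineq[of "\<lambda>(j,p). E j p" "\<lambda>(j,p). cmod (b j) * cmod (c p)" ?K]
    by (simp add: case_prod_beta)
  also have "L2_set (\<lambda>(j,p). E j p) ?K = sqrt (\<Sum>j<m. \<Sum>p<q. (E j p)\<^sup>2)"
    by (simp add: L2_set_def sum.cartesian_product case_prod_beta)
  also have "L2_set (\<lambda>(j,p). cmod (b j) * cmod (c p)) ?K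
      = sqrt ((\<Sum>j<m. (cmod (b j))\<^sup>2) * (\<Sum>p<q. (cmod (c p))\<^sup>2))"
    unfolding L2_set_def sum_product
    by (simp add: sum.cartesian_product power_mult_distrib split_def)
  also have "\<dots> = sqrt (\<Sum>j<m. (cmod (b j))\<^sup>2) * sqrt (\<Sum>p<q. (cmod (c p))\<^sup>2)"
    by (rule real_sqrt_mult)
  finally show ?thesis .
qed


lemma L1:
  fixes U :: "nat \<Rightarrow> nat \<Rightarrow> real" and W :: "nat \<Rightarrow> real" and b :: "nat \<Rightarrow> complex"
  shows "(\<Sum>a<m. of_real (\<Sum>x<k. U a x * W x) * b a) = (\<Sum>x<k. of_real (W x) * (\<Sum>a<m. of_real (U a x) * b a))"
  by (simp add: of_real_sum sum_distrib_left sum_distrib_right mult_ac sum.swap[of _ "{..<k}"])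

lemma contr_diff:
  "contr23 T M2 P b c n - contr23 T' M2 P b c n = contr23 (\<lambda>n j p. T n j p - T' n j p) M2 P b c n"
  unfolding contr23_def by (simp add: sum_subtractf[symmetric] algebra_simps)

lemma contr_bound:
  "L2_set (\<lambda>n. cmod (contr23 E M2 P b c n)) {..<N}
     \<le> frob3 N M2 P E * (sqrt (\<Sum>j<M2. (cmod (b j))\<^sup>2) * sqrt (\<Sum>p<P. (cmod (c p))\<^sup>2))"
proof -
  let ?k = "sqrt (\<Sum>j<M2. (cmod (b j))\<^sup>2) * sqrt (\<Sum>p<P. (cmod (c p))\<^sup>2)"
  have "L2_set (\<lambda>n. cmod (contr23 E M2 P b c n)) {..<N}
      \<le> L2_set (\<lambda>n. sqrt (\<Sum>j<M2. \<Sum>p<P. (E n j p)\<^sup>2) * ?k) {..<N}"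
    unfolding contr23_def by (intro L2_set_mono CS) auto
  also have "\<dots> = L2_set (\<lambda>n. sqrt (\<Sum>j<M2. \<Sum>p<P. (E n j p)\<^sup>2)) {..<N} * ?k"
    by (rule L2_set_left_distrib[symmetric]) (auto intro!: mult_nonneg_nonneg real_sqrt_ge_zero sum_nonneg)
  also have "L2_set (\<lambda>n. sqrt (\<Sum>j<M2. \<Sum>p<P. (E n j p)\<^sup>2)) {..<N} = frob3 N M2 P E"
    unfolding L2_set_def frob3_def by (simp add: sum_nonneg)
  finally show ?thesis .
qed

lemma supnorm_ge: "n < N \<Longrightarrow> cmod (v n) \<le> supnorm N v"
  unfolding supnorm_def by (intro Max_ge) auto

theorem theorem3:
  fixes x y :: "int \<Rightarrow> complex" and t0 :: int
    and N M1 M2 P R1 R2 R3 M2t Pt :: nat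
    and U2 U3 :: "nat \<Rightarrow> nat \<Rightarrow> real"
    and Gs :: "nat \<Rightarrow> nat \<Rightarrow> nat \<Rightarrow> complex" and As Bs Cs :: "nat \<Rightarrow> nat \<Rightarrow> complex"
  assumes pos: "0 < N" "0 < M1" "0 < M2" "0 < P" "0 < R1" "0 < R2" "0 < R3" "0 < M2t" "0 < Pt"
    and dims: "M2t \<le> M2" "Pt \<le> P"
    and U2: "orthonormal_cols M2 M2t U2" and U3: "orthonormal_cols P Pt U3"
    and opt: "\<And>G A B C. residual N (yvec y t0) (Hmat x t0) M1 (Mten x t0) M2 P R1 R2 R3 Gs As Bs Cs
                 \<le> residual N (yvec y t0) (Hmat x t0) M1 (Mten x t0) M2 P R1 R2 R3 G A B C"
  shows "Inf {residual N (yvec y t0) (Hmat x t0) M1 (compress (Mten x t0) M2 P U2 U3) M2t Pt R1 R2 R3 G A Bt Ct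
              | G A Bt Ct. True}
    \<le> residual N (yvec y t0) (Hmat x t0) M1 (Mten x t0) M2 P R1 R2 R3 Gs As Bs Cs
      + frob3 N M2 P (\<lambda>n j p. Mten x t0 n j p - project (Mten x t0) M2 P M2t Pt U2 U3 n j p)
        * (\<Sum>r1<R1. \<Sum>r2<R2. \<Sum>r3<R3. cmod (Gs r1 r2 r3) * supnorm N (HA (Hmat x t0) M1 As r1)
             * colnorm M2 Bs r2 * colnorm P Cs r3)"
proof -
  define H where "H = Hmat x t0"
  define T where "T = Mten x t0"
  define Y where "Y = yvec y t0"
  define Tp where "Tp = project T M2 P M2t Pt U2 U3"
  define E where "E = (\<lambda>n j p. T n j p - Tp n j p)"
  define Bt where "Bt = (\<lambda>k r. \<Sum>a<M2. of_real (U2 a k) * Bs a r :: complex)"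
  define Ct where "Ct = (\<lambda>k r. \<Sum>a<P. of_real (U3 a k) * Cs a r :: complex)"
  define S where "S = (\<lambda>T' n. \<Sum>r1<R1. \<Sum>r2<R2. \<Sum>r3<R3.
        Gs r1 r2 r3 * HA H M1 As r1 n * contr23 T' M2 P (\<lambda>j. Bs j r2) (\<lambda>p. Cs p r3) n)"
  define F where "F = frob3 N M2 P E"
  have Fnn: "0 \<le> F" unfolding F_def frob3_def by (auto intro!: real_sqrt_ge_zero sum_nonneg)
  have ceq: "contr23 (compress T M2 P U2 U3) M2t Pt (\<lambda>j. Bt j r2) (\<lambda>p. Ct p r3) n
      = contr23 Tp M2 P (\<lambda>j. Bs j r2) (\<lambda>p. Cs p r3) n" for r2 r3 n
    unfolding contr23_def compress_def Tp_def project_def lemA Bt_def Ct_def by (simp only: L1)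
  have res_L2: "residual N Y H M1 T' M2' P' R1 R2 R3 G A B C
     = L2_set (\<lambda>n. cmod (Y n - (\<Sum>r1<R1. \<Sum>r2<R2. \<Sum>r3<R3.
        G r1 r2 r3 * HA H M1 A r1 n * contr23 T' M2' P' (\<lambda>j. B j r2) (\<lambda>p. C p r3) n))) {..<N}"
    for T' M2' P' G A B C
    unfolding residual_def L2_set_def by simp
  have "Inf {residual N Y H M1 (compress T M2 P U2 U3) M2t Pt R1 R2 R3 G A Bt Ct | G A Bt Ct. True}
      \<le> residual N Y H M1 (compress T M2 P U2 U3) M2t Pt R1 R2 R3 Gs As Bt Ct"
    by (rule cInf_lower) (auto intro!: bdd_belowI[where m=0] real_sqrt_ge_zero sum_nonneg simp: residual_def)
  also have "\<dots> = L2_set (\<lambda>n. cmod (Y n - S Tp n)) {..<N}"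
    unfolding res_L2 S_def ceq ..
  also have "\<dots> \<le> L2_set (\<lambda>n. cmod (Y n - S T n) + cmod (S E n)) {..<N}"
  proof (rule L2_set_mono)
    fix n
    have "S T n - S Tp n = S E n"
      unfolding S_def E_def
      by (simp add: sum_subtractf[symmetric] contr_diff[symmetric] algebra_simps)
    then have "Y n - S Tp n = (Y n - S T n) + S E n" by (simp add: algebra_simps)
    then show "cmod (Y n - S Tp n) \<le> cmod (Y n - S T n) + cmod (S E n)"
      by (metis norm_triangle_ineq)
  qed simp
  also have "\<dots> \<le> L2_set (\<lambda>n. cmod (Y n - S T n)) {..<N} + L2_set (\<lambda>n. cmod (S E n)) {..<N}"
    by (rule L2_set_triangle_ineq)
  also have "L2_set (\<lambda>n. cmod (Y n - S T n)) {..<N} = residual N Y H M1 T M2 P R1 R2 R3 Gs As Bs Cs"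
    unfolding res_L2 S_def ..
  also have "L2_set (\<lambda>n. cmod (S E n)) {..<N} \<le> F * (\<Sum>r1<R1. \<Sum>r2<R2. \<Sum>r3<R3. cmod (Gs r1 r2 r3) * supnorm N (HA H M1 As r1)
             * colnorm M2 Bs r2 * colnorm P Cs r3)"
  proof -
    have "L2_set (\<lambda>n. cmod (S E n)) {..<N} \<le> (\<Sum>r1<R1. \<Sum>r2<R2. \<Sum>r3<R3.
         L2_set (\<lambda>n. cmod (Gs r1 r2 r3 * HA H M1 As r1 n * contr23 E M2 P (\<lambda>j. Bs j r2) (\<lambda>p. Cs p r3) n)) {..<N})"
      unfolding S_def
      apply (rule order_trans[OF L2_sum], simp)
      apply (rule sum_mono, rule order_trans[OF L2_sum], simp)
      apply (rule sum_mono, rule L2_sum, simp)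
      done
    also have "\<dots> \<le> (\<Sum>r1<R1. \<Sum>r2<R2. \<Sum>r3<R3. F * (cmod (Gs r1 r2 r3) * supnorm N (HA H M1 As r1)
             * colnorm M2 Bs r2 * colnorm P Cs r3))"
    proof (intro sum_mono)
      fix r1 r2 r3
      let ?c = "\<lambda>n. contr23 E M2 P (\<lambda>j. Bs j r2) (\<lambda>p. Cs p r3) n"
      let ?s = "supnorm N (HA H M1 As r1)"
      have s0: "0 \<le> ?s" using supnorm_ge[OF pos(1)] by (meson norm_ge_zero order_trans)
      have e1: "L2_set (\<lambda>n. cmod (Gs r1 r2 r3 * HA H M1 As r1 n * ?c n)) {..<N}
          = cmod (Gs r1 r2 r3) * L2_set (\<lambda>n. cmod (HA H M1 As r1 n) * cmod (?c n)) {..<N}"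
        by (subst L2_set_right_distrib) (simp_all add: norm_mult mult.assoc)
      have e2: "L2_set (\<lambda>n. cmod (HA H M1 As r1 n) * cmod (?c n)) {..<N}
          \<le> L2_set (\<lambda>n. ?s * cmod (?c n)) {..<N}"
        by (rule L2_set_mono) (auto intro!: mult_right_mono supnorm_ge)
      have e3: "L2_set (\<lambda>n. ?s * cmod (?c n)) {..<N} = ?s * L2_set (\<lambda>n. cmod (?c n)) {..<N}"
        by (rule L2_set_right_distrib[symmetric, OF s0])
      have e4: "L2_set (\<lambda>n. cmod (?c n)) {..<N} \<le> F * (colnorm M2 Bs r2 * colnorm P Cs r3)"
        unfolding F_def colnorm_def by (rule contr_bound)
      have e5: "?s * L2_set (\<lambda>n. cmod (?c n)) {..<N} \<le> ?s * (F * (colnorm M2 Bs r2 * colnorm P Cs r3))"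
        by (rule mult_left_mono[OF e4 s0])
      have "cmod (Gs r1 r2 r3) * L2_set (\<lambda>n. cmod (HA H M1 As r1 n) * cmod (?c n)) {..<N}
         \<le> cmod (Gs r1 r2 r3) * (?s * (F * (colnorm M2 Bs r2 * colnorm P Cs r3)))"
        by (rule mult_left_mono[OF order_trans[OF e2 order_trans[OF eq_refl[OF e3] e5]]]) simp
      then show "L2_set (\<lambda>n. cmod (Gs r1 r2 r3 * HA H M1 As r1 n * ?c n)) {..<N}
          \<le> F * (cmod (Gs r1 r2 r3) * ?s * colnorm M2 Bs r2 * colnorm P Cs r3)"
        unfolding e1 by (simp only: mult_ac)
    qed
    also have "\<dots> = F * (\<Sum>r1<R1. \<Sum>r2<R2. \<Sum>r3<R3. cmod (Gs r1 r2 r3) * supnorm N (HA H M1 As r1)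
             * colnorm M2 Bs r2 * colnorm P Cs r3)"
      by (simp add: sum_distrib_left)
    finally show ?thesis .
  qed
  finally show ?thesis unfolding H_def T_def Y_def F_def E_def Tp_def by simp
qed

end
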